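(* Let $R$ be a commutative local ring and $s\in U(R)$. Then the ring $M_2(R;s)$ is not strongly $J$-clean.
   Context: A commutative ring $R$ is local if it has a unique maximal ideal $J(R)$ (its Jacobson radical); $U(R)$ is the group of units. For $s\in R$, $M_2(R;s)$ denotes the ring whose elements are the $2\times 2$ arrays $\left[\begin{smallmatrix} a&b\\ c&d\end{smallmatrix}\right]$ with $a,b,c,d\in R$, with componentwise addition and multiplication $\left[\begin{smallmatrix} a&b\\ c&d\end{smallmatrix}\right]\left[\begin{smallmatrix} a'&b'\\ c'&d'\end{smallmatrix}\right]=\left[\begin{smallmatrix} aa'+s^2bc'&ab'+bd'\\ ca'+dc'&s^2cb'+dd'\end{smallmatrix}\right]$. An element $a$ of a ring $T$ is strongly $J$-clean if there is an idempotent $e\in T$ with $ae=ea$ and $a-e\in J(T)$; a ring is strongly $J$-clean if all its elements are. *)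

theory Defs
  imports "HOL-Algebra.Algebra"
begin

definition local_ring :: "('a, 'b) ring_scheme \<Rightarrow> bool" where
  "local_ring R \<longleftrightarrow> cring R \<and> (\<exists>!M. maximalideal M R)"

text \<open>The ring M_2(R;s): 2x2 arrays (a,b,c,d) = [[a,b],[c,d]] with componentwise
  addition and the twisted multiplication
  [[a,b],[c,d]] [[a',b'],[c',d']] = [[aa' + s^2 bc', ab' + bd'],[ca' + dc', s^2 cb' + dd']].\<close>
definition M2 :: "('a, 'b) ring_scheme \<Rightarrow> 'a \<Rightarrow> ('a \<times> 'a \<times> 'a \<times> 'a) ring" where
  "M2 R s = \<lparr> carrier = {(a, b, c, d). a \<in> carrier R \<and> b \<in> carrier R \<and> c \<in> carrier R \<and> d \<in> carrier R},
     monoid.mult = (\<lambda>(a, b, c, d) (a', b', c', d').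
        (a \<otimes>\<^bsub>R\<^esub> a' \<oplus>\<^bsub>R\<^esub> (s [^]\<^bsub>R\<^esub> (2::nat)) \<otimes>\<^bsub>R\<^esub> b \<otimes>\<^bsub>R\<^esub> c',
         a \<otimes>\<^bsub>R\<^esub> b' \<oplus>\<^bsub>R\<^esub> b \<otimes>\<^bsub>R\<^esub> d',
         c \<otimes>\<^bsub>R\<^esub> a' \<oplus>\<^bsub>R\<^esub> d \<otimes>\<^bsub>R\<^esub> c',
         (s [^]\<^bsub>R\<^esub> (2::nat)) \<otimes>\<^bsub>R\<^esub> c \<otimes>\<^bsub>R\<^esub> b' \<oplus>\<^bsub>R\<^esub> d \<otimes>\<^bsub>R\<^esub> d')),
     monoid.one = (\<one>\<^bsub>R\<^esub>, \<zero>\<^bsub>R\<^esub>, \<zero>\<^bsub>R\<^esub>, \<one>\<^bsub>R\<^esub>),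
     ring.zero = (\<zero>\<^bsub>R\<^esub>, \<zero>\<^bsub>R\<^esub>, \<zero>\<^bsub>R\<^esub>, \<zero>\<^bsub>R\<^esub>),
     ring.add = (\<lambda>(a, b, c, d) (a', b', c', d').
        (a \<oplus>\<^bsub>R\<^esub> a', b \<oplus>\<^bsub>R\<^esub> b', c \<oplus>\<^bsub>R\<^esub> c', d \<oplus>\<^bsub>R\<^esub> d')) \<rparr>"

definition left_ideal :: "'a set \<Rightarrow> ('a, 'b) ring_scheme \<Rightarrow> bool" where
  "left_ideal I T \<longleftrightarrow> additive_subgroup I T \<and>
     (\<forall>a \<in> carrier T. \<forall>x \<in> I. a \<otimes>\<^bsub>T\<^esub> x \<in> I)"

definition maximal_left_ideal :: "'a set \<Rightarrow> ('a, 'b) ring_scheme \<Rightarrow> bool" where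
  "maximal_left_ideal I T \<longleftrightarrow> left_ideal I T \<and> I \<noteq> carrier T \<and>
     (\<forall>K. left_ideal K T \<and> I \<subseteq> K \<longrightarrow> K = I \<or> K = carrier T)"

definition jacobson_radical :: "('a, 'b) ring_scheme \<Rightarrow> 'a set" where
  "jacobson_radical T = carrier T \<inter> \<Inter> {I. maximal_left_ideal I T}"

definition strongly_J_clean_elem :: "('a, 'b) ring_scheme \<Rightarrow> 'a \<Rightarrow> bool" where
  "strongly_J_clean_elem T a \<longleftrightarrow>
     (\<exists>e \<in> carrier T. e \<otimes>\<^bsub>T\<^esub> e = e \<and> a \<otimes>\<^bsub>T\<^esub> e = e \<otimes>\<^bsub>T\<^esub> a
        \<and> a \<ominus>\<^bsub>T\<^esub> e \<in> jacobson_radical T)"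

definition strongly_J_clean :: "('a, 'b) ring_scheme \<Rightarrow> bool" where
  "strongly_J_clean T \<longleftrightarrow> (\<forall>a \<in> carrier T. strongly_J_clean_elem T a)"

end

theory Submission
  imports Defs
begin

lemma M2_carrier: "((a,b,c,d) \<in> carrier (M2 R s)) = (a \<in> carrier R \<and> b \<in> carrier R \<and> c \<in> carrier R \<and> d \<in> carrier R)"
  by (simp add: M2_def)

lemma M2_mult: "(a,b,c,d) \<otimes>\<^bsub>M2 R s\<^esub> (a',b',c',d') =
        (a \<otimes>\<^bsub>R\<^esub> a' \<oplus>\<^bsub>R\<^esub> (s [^]\<^bsub>R\<^esub> (2::nat)) \<otimes>\<^bsub>R\<^esub> b \<otimes>\<^bsub>R\<^esub> c',
         a \<otimes>\<^bsub>R\<^esub> b' \<oplus>\<^bsub>R\<^esub> b \<otimes>\<^bsub>R\<^esub> d',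
         c \<otimes>\<^bsub>R\<^esub> a' \<oplus>\<^bsub>R\<^esub> d \<otimes>\<^bsub>R\<^esub> c',
         (s [^]\<^bsub>R\<^esub> (2::nat)) \<otimes>\<^bsub>R\<^esub> c \<otimes>\<^bsub>R\<^esub> b' \<oplus>\<^bsub>R\<^esub> d \<otimes>\<^bsub>R\<^esub> d')"
  by (simp add: M2_def)

lemma M2_add: "(a,b,c,d) \<oplus>\<^bsub>M2 R s\<^esub> (a',b',c',d') =
        (a \<oplus>\<^bsub>R\<^esub> a', b \<oplus>\<^bsub>R\<^esub> b', c \<oplus>\<^bsub>R\<^esub> c', d \<oplus>\<^bsub>R\<^esub> d')"
  by (simp add: M2_def)

lemma M2_one: "\<one>\<^bsub>M2 R s\<^esub> = (\<one>\<^bsub>R\<^esub>, \<zero>\<^bsub>R\<^esub>, \<zero>\<^bsub>R\<^esub>, \<one>\<^bsub>R\<^esub>)"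
  by (simp add: M2_def)

lemma M2_zero: "\<zero>\<^bsub>M2 R s\<^esub> = (\<zero>\<^bsub>R\<^esub>, \<zero>\<^bsub>R\<^esub>, \<zero>\<^bsub>R\<^esub>, \<zero>\<^bsub>R\<^esub>)"
  by (simp add: M2_def)

lemma M2_ainv:
  fixes R (structure)
  assumes R: "cring R" and c: "a \<in> carrier R" "b \<in> carrier R" "c \<in> carrier R" "d \<in> carrier R"
  shows "\<ominus>\<^bsub>M2 R s\<^esub> (a,b,c,d) = (\<ominus>\<^bsub>R\<^esub> a, \<ominus>\<^bsub>R\<^esub> b, \<ominus>\<^bsub>R\<^esub> c, \<ominus>\<^bsub>R\<^esub> d)"
proof -
  interpret cring R by fact
  have th: "\<And>x. (THE y. y \<in> carrier R \<and> x \<oplus> y = \<zero> \<and> y \<oplus> x = \<zero>) = \<ominus> x"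
    by (simp add: a_inv_def m_inv_def)
  show ?thesis
    unfolding a_inv_def m_inv_def
  proof (rule the_equality, goal_cases)
    case 1
    then show ?case
      using c by (simp add: M2_def th r_neg l_neg)
  next
    case (2 y)
    then obtain p q r t where y: "y = (p,q,r,t)" and h: "p \<in> carrier R" "q \<in> carrier R" "r \<in> carrier R" "t \<in> carrier R"
      "p \<oplus> a = \<zero>" "q \<oplus> b = \<zero>" "r \<oplus> c = \<zero>" "t \<oplus> d = \<zero>"
      by (cases y) (auto simp: M2_def)
    show ?case
      using h c by (simp add: y th minus_equality[symmetric])
  qed
qed


lemma M2_addmon: "x \<otimes>\<^bsub>add_monoid T\<^esub> y = x \<oplus>\<^bsub>T\<^esub> y" "\<one>\<^bsub>add_monoid T\<^esub> = \<zero>\<^bsub>T\<^esub>"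
  "carrier (add_monoid T) = carrier T" "m_inv (add_monoid T) = a_inv T"
  by (auto simp: a_inv_def)

lemma units_cancel:
  fixes R (structure)
  assumes "ring R" "u \<in> Units R" "z \<in> carrier R"
  shows "inv u \<otimes> (u \<otimes> z) = z"
proof -
  interpret ring R by fact
  show ?thesis using assms(2,3) by (metis Units_closed Units_inv_closed Units_l_inv l_one m_assoc)
qed

lemma L2_max:
  fixes R (structure)
  assumes R: "cring R" and su: "s \<in> Units R" and mx: "maximalideal m R"
  shows "maximal_left_ideal {(a,b,c,d). a \<in> carrier R \<and> b \<in> m \<and> c \<in> carrier R \<and> d \<in> m} (M2 R s)"
    (is "maximal_left_ideal ?L ?T")
proof -
  interpret cring R by fact
  have idm: "ideal m R" using mx maximalideal.axioms(1) by blast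
  have mc: "m \<subseteq> carrier R" using idm by (meson additive_subgroup.a_subset ideal.axioms(1))
  have madd: "\<And>x y. x \<in> m \<Longrightarrow> y \<in> m \<Longrightarrow> x \<oplus> y \<in> m"
    using idm by (meson additive_subgroup.a_closed ideal.axioms(1))
  have mneg: "\<And>x. x \<in> m \<Longrightarrow> \<ominus> x \<in> m"
    using idm by (meson additive_subgroup.a_inv_closed ideal.axioms(1))
  have m0: "\<zero> \<in> m"
    using idm by (meson additive_subgroup.zero_closed ideal.axioms(1))
  have mmul: "\<And>x r. x \<in> m \<Longrightarrow> r \<in> carrier R \<Longrightarrow> r \<otimes> x \<in> m"
    using idm by (meson ideal.I_l_closed)
  have m1: "\<one> \<notin> m"
    using idm mx ideal.one_imp_carrier maximalideal.I_notcarr by metis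
  have s2: "s [^] (2::nat) \<in> Units R" using su by (simp add: Units_pow_closed)
  have s2c: "s [^] (2::nat) \<in> carrier R" using s2 Units_closed by blast
  have sub: "additive_subgroup ?L ?T"
    unfolding additive_subgroup_def
  proof (rule subgroup.intro, goal_cases)
    case 1 then show ?case using mc by (auto simp: M2_addmon M2_def)
  next
    case (2 x y) then show ?case using mc madd
      by (auto simp: M2_addmon M2_add)
  next
    case 3 then show ?case using m0 by (simp add: M2_addmon M2_zero)
  next
    case (4 x)
    have iv: "inv\<^bsub>add_monoid ?T\<^esub> x = \<ominus>\<^bsub>?T\<^esub> x" by (simp add: a_inv_def)
    obtain a b c d where xe: "x = (a,b,c,d)" by (cases x)
    have xm: "a \<in> carrier R" "b \<in> m" "c \<in> carrier R" "d \<in> m" using 4 xe by auto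
    then have "\<ominus>\<^bsub>?T\<^esub> x = (\<ominus> a, \<ominus> b, \<ominus> c, \<ominus> d)" using mc unfolding xe by (intro M2_ainv[OF R]) auto
    then show ?case unfolding iv using xm mneg by auto
  qed
  have lid: "left_ideal ?L ?T"
    unfolding left_ideal_def
  proof (intro conjI sub ballI)
    fix A Q assume A: "A \<in> carrier ?T" and Q: "Q \<in> ?L"
    obtain x y z w where Ae: "A = (x,y,z,w)" by (cases A)
    obtain a b c d where Qe: "Q = (a,b,c,d)" by (cases Q)
    show "A \<otimes>\<^bsub>?T\<^esub> Q \<in> ?L"
      using A Q mc s2c unfolding Ae Qe M2_mult M2_carrier
      by (auto intro!: madd mmul)
  qed
  have ne: "?L \<noteq> carrier ?T"
  proof
    assume "?L = carrier ?T"
    moreover have "(\<zero>,\<one>,\<zero>,\<zero>) \<in> carrier ?T" by (simp add: M2_carrier)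
    ultimately show False using m1 by auto
  qed
  have mxl: "K = ?L \<or> K = carrier ?T" if K: "left_ideal K ?T" "?L \<subseteq> K" for K
  proof (cases "K = ?L")
    case True then show ?thesis by simp
  next
    case False
    have Ksub: "subgroup K (add_monoid ?T)"
      using K(1) unfolding left_ideal_def additive_subgroup_def by blast
    have Kc: "K \<subseteq> carrier ?T" using subgroup.subset[OF Ksub] by (simp add: M2_addmon)
    have Kadd: "\<And>x y. x \<in> K \<Longrightarrow> y \<in> K \<Longrightarrow> x \<oplus>\<^bsub>?T\<^esub> y \<in> K"
      using subgroup.m_closed[OF Ksub] by (simp add: M2_addmon)
    have Kmul: "\<And>A x. A \<in> carrier ?T \<Longrightarrow> x \<in> K \<Longrightarrow> A \<otimes>\<^bsub>?T\<^esub> x \<in> K"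
      using K(1) unfolding left_ideal_def by blast
    obtain Q where Q: "Q \<in> K" "Q \<notin> ?L" using False K(2) by blast
    obtain a b c d where Qe: "Q = (a,b,c,d)" by (cases Q)
    have abcd: "a \<in> carrier R" "b \<in> carrier R" "c \<in> carrier R" "d \<in> carrier R"
      using Q(1) Kc unfolding Qe by (auto simp: M2_carrier)
    have bd: "b \<notin> m \<or> d \<notin> m" using Q(2) abcd unfolding Qe by auto
    have "(\<ominus> a, \<zero>, \<ominus> c, \<zero>) \<in> K" using K(2) m0 abcd by auto
    then have "Q \<oplus>\<^bsub>?T\<^esub> (\<ominus> a, \<zero>, \<ominus> c, \<zero>) \<in> K" using Kadd Q(1) by blast
    then have Z: "(\<zero>, b, \<zero>, d) \<in> K" using abcd unfolding Qe M2_add by (simp add: r_neg)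
    define I where "I = {x \<in> carrier R. (\<zero>,\<zero>,\<zero>,x) \<in> K}"
    have Ione: "(\<zero>,\<zero>,\<zero>,r \<otimes> x) \<in> K" if "r \<in> carrier R" "x \<in> I" for r x
    proof -
      have "(\<zero>,\<zero>,\<zero>,r) \<otimes>\<^bsub>?T\<^esub> (\<zero>,\<zero>,\<zero>,x) \<in> K"
        using that Kmul unfolding I_def by (auto simp: M2_carrier)
      then show ?thesis using that s2c unfolding I_def M2_mult by simp
    qed
    have idI: "ideal I R"
    proof (rule idealI)
      show "ring R" by (rule ring_axioms)
      show "subgroup I (add_monoid R)"
      proof (rule subgroup.intro, goal_cases)
        case 1 then show ?case unfolding I_def by auto
      next
        case (2 x y)
        then have "(\<zero>,\<zero>,\<zero>,x) \<oplus>\<^bsub>?T\<^esub> (\<zero>,\<zero>,\<zero>,y) \<in> K" using Kadd unfolding I_def by auto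
        then show ?case using 2 unfolding I_def M2_add by simp
      next
        case 3
        have "(\<zero>,\<zero>,\<zero>,\<zero>) \<in> ?L" using m0 by auto
        then show ?case using K(2) unfolding I_def by auto
      next
        case (4 x)
        have "(\<zero>,\<zero>,\<zero>,\<ominus>\<one> \<otimes> x) \<in> K" using Ione 4 by simp
        then show ?case using 4 unfolding I_def by (simp add: l_minus a_inv_def[symmetric])
      qed
      show "\<And>a x. a \<in> I \<Longrightarrow> x \<in> carrier R \<Longrightarrow> x \<otimes> a \<in> I"
        using Ione unfolding I_def by auto
      show "\<And>a x. a \<in> I \<Longrightarrow> x \<in> carrier R \<Longrightarrow> a \<otimes> x \<in> I"
        using Ione unfolding I_def by (metis (no_types, lifting) m_comm m_closed mem_Collect_eq)
    qed
    have mI: "m \<subseteq> I"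
    proof
      fix x assume "x \<in> m"
      then have "(\<zero>,\<zero>,\<zero>,x) \<in> ?L" using m0 by auto
      then show "x \<in> I" using K(2) mc \<open>x \<in> m\<close> unfolding I_def by auto
    qed
    have "\<exists>x\<in>I. x \<notin> m"
    proof (cases "d \<in> m")
      case False
      have "(\<zero>,\<zero>,\<zero>,\<one>) \<otimes>\<^bsub>?T\<^esub> (\<zero>, b, \<zero>, d) \<in> K"
        using Kmul Z by (simp add: M2_carrier)
      then have "d \<in> I" using abcd s2c unfolding M2_mult I_def by simp
      then show ?thesis using False by blast
    next
      case True
      then have bm: "b \<notin> m" using bd by blast
      have "(\<zero>,\<zero>,\<one>,\<zero>) \<otimes>\<^bsub>?T\<^esub> (\<zero>, b, \<zero>, d) \<in> K"
        using Kmul Z by (simp add: M2_carrier)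
      then have "s [^] (2::nat) \<otimes> b \<in> I" using abcd s2c unfolding M2_mult I_def by simp
      moreover have "s [^] (2::nat) \<otimes> b \<notin> m"
      proof
        assume "s [^] (2::nat) \<otimes> b \<in> m"
        then have "inv (s [^] (2::nat)) \<otimes> (s [^] (2::nat) \<otimes> b) \<in> m"
          using mmul s2 by blast
        then show False using bm units_cancel[OF ring_axioms s2 abcd(2)] by simp
      qed
      ultimately show ?thesis by blast
    qed
    then have "I \<noteq> m" by blast
    moreover have "I \<subseteq> carrier R" unfolding I_def by auto
    ultimately have "I = carrier R"
      using maximalideal.I_maximal[OF mx idI mI] by blast
    then have "(\<zero>,\<zero>,\<zero>,\<one>) \<in> K" unfolding I_def by auto
    moreover have "(\<one>,\<zero>,\<zero>,\<zero>) \<in> K" using K(2) m0 by auto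
    ultimately have "(\<one>,\<zero>,\<zero>,\<zero>) \<oplus>\<^bsub>?T\<^esub> (\<zero>,\<zero>,\<zero>,\<one>) \<in> K" using Kadd by blast
    then have one: "(\<one>,\<zero>,\<zero>,\<one>) \<in> K" unfolding M2_add by simp
    have "carrier ?T \<subseteq> K"
    proof
      fix A assume A: "A \<in> carrier ?T"
      obtain x y z w where Ae: "A = (x,y,z,w)" by (cases A)
      have "A \<otimes>\<^bsub>?T\<^esub> (\<one>,\<zero>,\<zero>,\<one>) \<in> K" using Kmul A one by blast
      then show "A \<in> K" using A s2c unfolding Ae M2_mult M2_carrier by simp
    qed
    then show ?thesis using Kc by blast
  qed
  show ?thesis unfolding maximal_left_ideal_def using lid ne mxl by blast
qed

lemma main_aux:
  fixes R (structure)
  assumes "local_ring R"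
    and "s \<in> Units R"
  shows "\<not> strongly_J_clean (M2 R s)"
proof
  assume SJ: "strongly_J_clean (M2 R s)"
  have R: "cring R" and "\<exists>!M. maximalideal M R" using assms(1) unfolding local_ring_def by auto
  then obtain m where mx: "maximalideal m R" by blast
  interpret cring R by fact
  have idm: "ideal m R" using mx maximalideal.axioms(1) by blast
  have m1: "\<one> \<notin> m"
    using idm mx ideal.one_imp_carrier maximalideal.I_notcarr by metis
  have s2: "s [^] (2::nat) \<in> Units R" using assms(2) by (simp add: Units_pow_closed)
  have s2c: "s [^] (2::nat) \<in> carrier R" using s2 Units_closed by blast
  let ?T = "M2 R s"
  let ?L = "{(a,b,c,d). a \<in> carrier R \<and> b \<in> m \<and> c \<in> carrier R \<and> d \<in> m}"
  have N: "(\<zero>,\<one>,\<zero>,\<zero>) \<in> carrier ?T" by (simp add: M2_carrier)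
  then obtain e where e: "e \<in> carrier ?T" "e \<otimes>\<^bsub>?T\<^esub> e = e"
    "(\<zero>,\<one>,\<zero>,\<zero>) \<otimes>\<^bsub>?T\<^esub> e = e \<otimes>\<^bsub>?T\<^esub> (\<zero>,\<one>,\<zero>,\<zero>)"
    "(\<zero>,\<one>,\<zero>,\<zero>) \<ominus>\<^bsub>?T\<^esub> e \<in> jacobson_radical ?T"
    using SJ unfolding strongly_J_clean_def strongly_J_clean_elem_def by blast
  obtain x y z w where ee: "e = (x,y,z,w)" by (cases e)
  have c: "x \<in> carrier R" "y \<in> carrier R" "z \<in> carrier R" "w \<in> carrier R"
    using e(1) unfolding ee M2_carrier by auto
  have l1: "(\<zero>,\<one>,\<zero>,\<zero>) \<otimes>\<^bsub>?T\<^esub> e = (s [^] (2::nat) \<otimes> z, w, \<zero>, \<zero>)"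
    using c s2c unfolding ee M2_mult by simp
  have l2: "e \<otimes>\<^bsub>?T\<^esub> (\<zero>,\<one>,\<zero>,\<zero>) = (\<zero>, x, \<zero>, s [^] (2::nat) \<otimes> z)"
    using c s2c unfolding ee M2_mult by simp
  have comm: "s [^] (2::nat) \<otimes> z = \<zero>" "w = x"
    using e(3) unfolding l1 l2 by (metis prod.inject)+
  have "inv (s [^] (2::nat)) \<otimes> (s [^] (2::nat) \<otimes> z) = \<zero>"
    using comm s2 by simp
  then have z0: "z = \<zero>" using units_cancel[OF ring_axioms s2 c(3)] by simp
  have l3: "e \<otimes>\<^bsub>?T\<^esub> e = (x \<otimes> x, x \<otimes> y \<oplus> y \<otimes> x, \<zero>, x \<otimes> x)"
    using c s2c unfolding ee M2_mult z0 comm(2) by simp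
  have idem: "x \<otimes> x = x" "x \<otimes> y \<oplus> y \<otimes> x = y"
  proof -
    have "(x \<otimes> x, x \<otimes> y \<oplus> y \<otimes> x, \<zero>, x \<otimes> x) = (x, y, \<zero>, x)"
      using e(2) unfolding l3 by (simp only: ee z0 comm(2))
    then show "x \<otimes> x = x" "x \<otimes> y \<oplus> y \<otimes> x = y" by (metis prod.inject)+
  qed
  have h1: "y = x \<otimes> y \<oplus> x \<otimes> y" using idem c by (simp add: m_comm)
  have "x \<otimes> y = x \<otimes> (x \<otimes> y \<oplus> x \<otimes> y)" by (rule arg_cong[OF h1])
  also have "\<dots> = (x \<otimes> x) \<otimes> y \<oplus> (x \<otimes> x) \<otimes> y" using c by (simp add: r_distr m_assoc)
  also have "\<dots> = y" by (simp only: idem(1) h1[symmetric])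
  finally have h2: "x \<otimes> y = y" .
  have "y \<oplus> y = y" using h1[symmetric] by (simp only: h2)
  then have y0: "y = \<zero>" using add.l_cancel_one[OF c(2) c(2)] by blast
  have notin: "(\<zero>,\<one>,\<zero>,\<zero>) \<ominus>\<^bsub>?T\<^esub> e \<notin> ?L"
    using c m1 unfolding a_minus_def ee y0 z0 by (simp add: M2_ainv[OF R] M2_add)
  have maxL: "maximal_left_ideal ?L ?T" by (rule L2_max[OF R assms(2) mx])
  have "(\<zero>,\<one>,\<zero>,\<zero>) \<ominus>\<^bsub>?T\<^esub> e \<in> \<Inter> {I. maximal_left_ideal I ?T}"
    using e(4) unfolding jacobson_radical_def by (rule IntD2)
  moreover have "?L \<in> {I. maximal_left_ideal I ?T}" using maxL by simp
  ultimately have "(\<zero>,\<one>,\<zero>,\<zero>) \<ominus>\<^bsub>?T\<^esub> e \<in> ?L"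
    by (rule InterD)
  then show False using notin by contradiction
qed

theorem corollary2p10:
  fixes R :: "('a, 'b) ring_scheme" and s :: 'a
  assumes "local_ring R"
    and "s \<in> Units R"
  shows "\<not> strongly_J_clean (M2 R s)"
  by (rule main_aux[OF assms])

end
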